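(* Let $p\in(0,1)$, $\gamma>0$, $B>0$, $w\in\mathbb{N}$, for each $N\in\mathbb{N}$ let $(\xi_j^{(N)*})_{j=1}^N$ be the unique maximizer of $\mathcal{T}_N$, and let $B^{(N)}=B-\sum_{i=1}^N\xi_i^{(N)*}$. Then $(B^{(N)})_{N\ge1}$ is strictly decreasing in $N$.
   Context: Logarithms are base 2. For an admissible (nonnegative, with sum at most $B$) sequence $(x_j)_{j\ge1}$, $$\mathcal{T}_\infty(x_1,x_2,\dots)=\sum_{k=1}^{w}p^2(1-p)^{k-1}\frac{k}{2}\log_2\!\Big(1+\gamma\frac{B}{k}\Big)+\sum_{j=1}^{\infty}p(1-p)^{j+w-1}\frac12\log_2(1+\gamma x_j)+\sum_{k=1}^{\infty}p^2(1-p)^{k+w-1}\frac{w}{2}\log_2\!\Big(1+\gamma\frac{B-\sum_{j=1}^{k}x_j}{w}\Big).$$ For $N\in\mathbb{N}$ and $\xi_1,\dots,\xi_N\ge0$ with $\sum_{j=1}^N\xi_j\le B$, define $\mathcal{T}_N(\xi_1,\dots,\xi_N)=\mathcal{T}_\infty(\xi_1,\dots,\xi_N,0,0,\dots)$. $\mathcal{T}_N$ has a unique maximizer over this compact set, denoted $(\xi_j^{(N)*})_{j=1}^N$. *)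

theory Defs
  imports "HOL-Analysis.Analysis"
begin

text \<open>Sequences are functions nat => real indexed from 1 (value at 0 is irrelevant).
  Logarithms are base 2.\<close>

definition T_inf :: "real \<Rightarrow> real \<Rightarrow> real \<Rightarrow> nat \<Rightarrow> (nat \<Rightarrow> real) \<Rightarrow> real" where
  "T_inf p \<gamma> B w x =
     (\<Sum>k=1..w. p^2 * (1-p)^(k-1) * (real k / 2) * log 2 (1 + \<gamma> * B / real k))
   + (\<Sum>i. (\<lambda>j. p * (1-p)^(j+w-1) * (1/2) * log 2 (1 + \<gamma> * x j)) (i+1))
   + (\<Sum>i. (\<lambda>k. p^2 * (1-p)^(k+w-1) * (real w / 2)
            * log 2 (1 + \<gamma> * (B - (\<Sum>j=1..k. x j)) / real w)) (i+1))"

definition T_N :: "real \<Rightarrow> real \<Rightarrow> real \<Rightarrow> nat \<Rightarrow> nat \<Rightarrow> (nat \<Rightarrow> real) \<Rightarrow> real" where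
  "T_N p \<gamma> B w N \<xi> = T_inf p \<gamma> B w (\<lambda>j. if 1 \<le> j \<and> j \<le> N then \<xi> j else 0)"

text \<open>Feasible set for T_N: nonnegative entries xi_1..xi_N with sum at most B;
  entries outside 1..N are normalized to 0 so that the maximizer is unique as a function.\<close>
definition feasible_N :: "real \<Rightarrow> nat \<Rightarrow> (nat \<Rightarrow> real) set" where
  "feasible_N B N = {\<xi>. (\<forall>j\<in>{1..N}. 0 \<le> \<xi> j) \<and> (\<Sum>j=1..N. \<xi> j) \<le> B
                        \<and> (\<forall>j. j \<notin> {1..N} \<longrightarrow> \<xi> j = 0)}"

definition opt_N :: "real \<Rightarrow> real \<Rightarrow> real \<Rightarrow> nat \<Rightarrow> nat \<Rightarrow> (nat \<Rightarrow> real)" where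
  "opt_N p \<gamma> B w N = (THE \<xi>. \<xi> \<in> feasible_N B N \<and>
       (\<forall>\<eta>\<in>feasible_N B N. T_N p \<gamma> B w N \<eta> \<le> T_N p \<gamma> B w N \<xi>))"

definition B_res :: "real \<Rightarrow> real \<Rightarrow> real \<Rightarrow> nat \<Rightarrow> nat \<Rightarrow> real" where
  "B_res p \<gamma> B w N = B - (\<Sum>i=1..N. opt_N p \<gamma> B w N i)"

end

theory Submission
  imports Defs
begin


definition uu :: "real \<Rightarrow> real \<Rightarrow> real \<Rightarrow> real" where
  "uu g w s = g / (1 + g * s / w)"

fun SM :: "real \<Rightarrow> real \<Rightarrow> real \<Rightarrow> real \<Rightarrow> real \<Rightarrow> nat \<Rightarrow> real \<times> real" where
  "SM p a g w R 0 = (R, uu g w R)"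
| "SM p a g w R (Suc i) = (let s = fst (SM p a g w R i); m = snd (SM p a g w R i);
      s' = s + max 0 (a^i / m - 1/g) in (s', m + p * a^(Suc i) * uu g w s'))"

definition xx :: "real \<Rightarrow> real \<Rightarrow> real \<Rightarrow> real \<Rightarrow> real \<Rightarrow> nat \<Rightarrow> real" where
  "xx p a g w R i = max 0 (a^i / snd (SM p a g w R i) - 1/g)"

lemma SM_fst_Suc: "fst (SM p a g w R (Suc i)) = fst (SM p a g w R i) + xx p a g w R i"
  by (simp add: xx_def Let_def)

lemma SM_snd_Suc: "snd (SM p a g w R (Suc i)) = snd (SM p a g w R i) + p * a^(Suc i) * uu g w (fst (SM p a g w R (Suc i)))"
  by (simp add: xx_def Let_def)

lemma SM_fst_0: "fst (SM p a g w R 0) = R" by simp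
lemma SM_snd_0: "snd (SM p a g w R 0) = uu g w R" by simp

declare SM.simps[simp del]

lemma uu_pos: "0 < g \<Longrightarrow> 0 < w \<Longrightarrow> 0 \<le> s \<Longrightarrow> 0 < uu g w s"
  unfolding uu_def by (simp add: add_pos_nonneg)

lemma uu_le: "0 < g \<Longrightarrow> 0 < w \<Longrightarrow> 0 \<le> s \<Longrightarrow> uu g w s \<le> g"
  unfolding uu_def by (simp add: divide_le_eq add_pos_nonneg)

lemma uu_less: "0 < g \<Longrightarrow> 0 < w \<Longrightarrow> 0 < s \<Longrightarrow> uu g w s < g"
  unfolding uu_def by (simp add: divide_less_eq add_pos_nonneg)

lemma a_pow: "0 < (p::real) \<Longrightarrow> p < 1 \<Longrightarrow> a = 1/(1-p) \<Longrightarrow> a^i = (1-p) * a^(Suc i)"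
proof -
  assume p: "0 < p" "p < 1" and a: "a = 1/(1-p)"
  have "1 - p \<noteq> 0" using p by simp
  hence "(1-p)*a = 1" using a by simp
  hence "(1-p)*a^(Suc i) = ((1-p)*a)*a^i" by (simp add: algebra_simps)
  thus ?thesis using \<open>(1-p)*a = 1\<close> by simp
qed

lemma lin3: "(c::real)*g = (1-p)*c*g + p*c*g" by (simp add: algebra_simps)

lemma a_pow_eq: "0 < (p::real) \<Longrightarrow> p < 1 \<Longrightarrow> a = 1/(1-p) \<Longrightarrow> a^(Suc i) * g = a^i * g + p * a^(Suc i) * g"
proof -
  assume p: "0 < p" "p < 1" and a: "a = 1/(1-p)"
  have e1: "a^i * g = (1-p) * a^(Suc i) * g" by (subst a_pow[OF p a, of i]) (rule refl)
  show ?thesis using e1 lin3[of "a^(Suc i)" g p] by linarith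
qed

lemma SM_bounds:
  assumes p: "0 < p" "p < 1" and a: "a = 1/(1-p)" and g: "0 < g" and w: "0 < w" and R: "0 \<le> R"
  shows "R \<le> fst (SM p a g w R i) \<and> 0 < snd (SM p a g w R i) \<and> snd (SM p a g w R i) \<le> a^i * g
     \<and> (0 < R \<longrightarrow> snd (SM p a g w R i) < a^i * g)"
proof (induction i)
  case 0
  then show ?case using uu_pos[OF g w R] uu_le[OF g w R] uu_less[OF g w] by (simp add: SM_fst_0 SM_snd_0)
next
  case (Suc i)
  let ?s = "fst (SM p a g w R i)" and ?m = "snd (SM p a g w R i)"
  let ?s' = "fst (SM p a g w R (Suc i))"
  have x0: "0 \<le> xx p a g w R i" by (simp add: xx_def)
  have s': "R \<le> ?s'" using Suc x0 by (simp add: SM_fst_Suc)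
  have apos: "0 < a" using a p by simp
  have pa: "0 < p * a^(Suc i)" using apos p by simp
  have u1: "0 < uu g w ?s'" using uu_pos[OF g w] s' R by simp
  have u2: "uu g w ?s' \<le> g" using uu_le[OF g w] s' R by simp
  have eq: "a^(Suc i) * g = a^i * g + p * a^(Suc i) * g"
    by (rule a_pow_eq[OF p a])
  have "snd (SM p a g w R (Suc i)) = ?m + p * a^(Suc i) * uu g w ?s'" by (rule SM_snd_Suc)
  moreover have "p * a^(Suc i) * uu g w ?s' \<le> p * a^(Suc i) * g"
    using mult_left_mono[OF u2, of "p*a^(Suc i)"] pa by simp
  moreover have "0 < R \<Longrightarrow> p * a^(Suc i) * uu g w ?s' < p * a^(Suc i) * g"
    using mult_strict_left_mono[OF uu_less[OF g w, of ?s'] pa] s' by simp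
  moreover have "0 < p * a^(Suc i) * uu g w ?s'" using pa u1 by simp
  ultimately show ?case using Suc s' eq by (intro conjI impI; linarith)
qed

lemma xx_pos:
  assumes p: "0 < p" "p < 1" and a: "a = 1/(1-p)" and g: "0 < g" and w: "0 < w" and R: "0 < R"
  shows "0 < xx p a g w R i"
proof -
  have "0 < snd (SM p a g w R i)" "snd (SM p a g w R i) < a^i * g"
    using SM_bounds[OF p a g w, of R i] R by auto
  hence "1/g < a^i / snd (SM p a g w R i)" using g by (simp add: field_simps)
  thus ?thesis by (simp add: xx_def)
qed

lemma SM_zero:
  assumes p: "0 < p" "p < 1" and a: "a = 1/(1-p)" and g: "0 < g" and w: "0 < w"
  shows "SM p a g w 0 i = (0, a^i * g)"
proof (induction i)
  case 0
  then show ?case by (simp add: SM.simps uu_def)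
next
  case (Suc i)
  have apos: "0 < a" using a p by simp
  have x: "xx p a g w 0 i = 0" using Suc apos g by (simp add: xx_def)
  have "fst (SM p a g w 0 (Suc i)) = 0" using Suc x by (simp add: SM_fst_Suc)
  moreover have "snd (SM p a g w 0 (Suc i)) = a^(Suc i) * g"
    using Suc calculation a_pow_eq[OF p a, of i g] by (simp add: SM_snd_Suc uu_def)
  ultimately show ?case by (metis prod.collapse)
qed

lemma uu_cont: "0 < g \<Longrightarrow> 0 < w \<Longrightarrow> continuous_on {0..} (uu g w)"
  unfolding uu_def
  by (intro continuous_intros) (auto simp: add_pos_nonneg intro!: order.strict_implies_not_eq[symmetric])

lemma SM_cont:
  assumes p: "0 < p" "p < 1" and a: "a = 1/(1-p)" and g: "0 < g" and w: "0 < w"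
  shows "continuous_on {0..} (\<lambda>R. fst (SM p a g w R i)) \<and> continuous_on {0..} (\<lambda>R. snd (SM p a g w R i))"
proof (induction i)
  case 0
  have "continuous_on {0..} (\<lambda>R. uu g w R)"
    unfolding uu_def using g w
    by (intro continuous_intros) (auto simp: add_pos_nonneg intro!: order.strict_implies_not_eq[symmetric])
  then show ?case by (simp add: SM_fst_0 SM_snd_0 continuous_on_id)
next
  case (Suc i)
  have pos: "\<And>R. R \<in> {0..} \<Longrightarrow> snd (SM p a g w R i) \<noteq> 0"
    using SM_bounds[OF p a g w] by (metis atLeast_iff less_irrefl)
  have cx: "continuous_on {0..} (\<lambda>R. xx p a g w R i)"
    unfolding xx_def using Suc pos
    by (intro continuous_on_max continuous_on_const continuous_on_diff continuous_on_divide) auto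
  have "continuous_on {0..} (\<lambda>R. fst (SM p a g w R i) + xx p a g w R i)"
    using Suc cx by (intro continuous_on_add) auto
  moreover have "(\<lambda>R. fst (SM p a g w R (Suc i))) = (\<lambda>R. fst (SM p a g w R i) + xx p a g w R i)"
    by (rule ext, rule SM_fst_Suc)
  ultimately have c1: "continuous_on {0..} (\<lambda>R. fst (SM p a g w R (Suc i)))"
    by (simp only:)
  have nn: "\<And>R. R \<in> {0..} \<Longrightarrow> 0 \<le> fst (SM p a g w R (Suc i))"
    using SM_bounds[OF p a g w] by (meson atLeast_iff order_trans)
  have "continuous_on {0..} (\<lambda>R. uu g w (fst (SM p a g w R (Suc i))))"
    by (rule continuous_on_compose2[OF uu_cont[OF g w] c1]) (use nn in auto)
  hence "continuous_on {0..} (\<lambda>R. snd (SM p a g w R i) + p * a^(Suc i) * uu g w (fst (SM p a g w R (Suc i))))"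
    using Suc by (intro continuous_on_add[OF conjunct2[OF Suc]] continuous_on_mult_left)
  moreover have "(\<lambda>R. snd (SM p a g w R (Suc i))) = (\<lambda>R. snd (SM p a g w R i) + p * a^(Suc i) * uu g w (fst (SM p a g w R (Suc i))))"
    by (rule ext, rule SM_snd_Suc)
  ultimately have c2: "continuous_on {0..} (\<lambda>R. snd (SM p a g w R (Suc i)))"
    by (simp only:)
  show ?case using c1 c2 by blast
qed



definition gg :: "real \<Rightarrow> real \<Rightarrow> real \<Rightarrow> real" where
  "gg g e x = g*(e-x)/(1+g*x) - (ln(1+g*e) - ln(1+g*x))"

lemma tang_strict: "0 < A \<Longrightarrow> 0 < (B::real) \<Longrightarrow> B \<noteq> A \<Longrightarrow> ln B - ln A < (B - A)/A"
proof -
  assume A: "0 < A" and B: "0 < B" and ne: "B \<noteq> A"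
  have le: "ln B - ln A \<le> (B - A)/A" by (rule ln_diff_le[OF B A])
  have "ln B - ln A \<noteq> (B - A)/A"
  proof
    assume eq: "ln B - ln A = (B - A)/A"
    have "ln (B/A) = B/A - 1" using eq A B by (simp add: ln_div diff_divide_distrib)
    hence "B/A = 1" using ln_eq_minus_one[of "B/A"] A B by simp
    thus False using ne A by simp
  qed
  thus ?thesis using le by simp
qed

lemma gg_nonneg: "0 < g \<Longrightarrow> 0 \<le> e \<Longrightarrow> 0 \<le> x \<Longrightarrow> 0 \<le> gg g e x"
proof -
  assume g: "0 < g" and e: "0 \<le> e" and x: "0 \<le> x"
  have A: "0 < 1 + g*x" and B: "0 < 1 + g*e" using g e x by (simp_all add: add_pos_nonneg)
  have "ln (1+g*e) - ln (1+g*x) \<le> ((1+g*e) - (1+g*x))/(1+g*x)" by (rule ln_diff_le[OF B A])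
  also have "\<dots> = g*(e-x)/(1+g*x)" by (simp add: algebra_simps)
  finally show ?thesis unfolding gg_def by simp
qed

lemma gg_pos: "0 < g \<Longrightarrow> 0 \<le> e \<Longrightarrow> 0 \<le> x \<Longrightarrow> e \<noteq> x \<Longrightarrow> 0 < gg g e x"
proof -
  assume g: "0 < g" and e: "0 \<le> e" and x: "0 \<le> x" and ne: "e \<noteq> x"
  have A: "0 < 1 + g*x" and B: "0 < 1 + g*e" using g e x by (simp_all add: add_pos_nonneg)
  have "1 + g*e \<noteq> 1 + g*x" using ne g by simp
  hence "ln (1+g*e) - ln (1+g*x) < ((1+g*e) - (1+g*x))/(1+g*x)" by (rule tang_strict[OF A B])
  also have "\<dots> = g*(e-x)/(1+g*x)" by (simp add: algebra_simps)
  finally show ?thesis unfolding gg_def by simp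
qed

lemma res_tan: "0 < g \<Longrightarrow> 0 < w \<Longrightarrow> 0 \<le> T \<Longrightarrow> 0 \<le> S \<Longrightarrow>
   w * (ln (1 + g*T/w) - ln (1 + g*S/w)) \<le> uu g w S * (T - S)"
proof -
  assume g: "0 < g" and w: "0 < w" and T: "0 \<le> T" and S: "0 \<le> S"
  have A: "0 < 1 + g*S/w" and B: "0 < 1 + g*T/w" using g w T S by (simp_all add: add_pos_nonneg)
  have "ln (1+g*T/w) - ln (1+g*S/w) \<le> ((1+g*T/w) - (1+g*S/w))/(1+g*S/w)" by (rule ln_diff_le[OF B A])
  hence "w * (ln (1+g*T/w) - ln (1+g*S/w)) \<le> w * (((1+g*T/w) - (1+g*S/w))/(1+g*S/w))"
    by (rule mult_left_mono) (use w in simp)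
  also have "\<dots> = uu g w S * (T - S)"
  proof -
    have e: "(1+g*T/w) - (1+g*S/w) = g*(T-S)/w" using w by (simp add: field_simps)
    define Q where "Q = 1+g*S/w"
    have Q: "0 < Q" using A Q_def by simp
    have fq: "w * ((g*(T-S)/w)/Q) = g/Q*(T-S)" using w Q by (simp add: field_simps)
    have e': "(1+g*T/w) - Q = g*(T-S)/w" using e Q_def by simp
    show ?thesis unfolding uu_def Q_def[symmetric] e' by (rule fq)
  qed
  finally show ?thesis .
qed

lemma Dlem:
  fixes S m x e T :: "nat \<Rightarrow> real" and p a g w :: real
  assumes p: "0<p" "p<1" and a: "a = 1/(1-p)" and g: "0<g" and w: "0<w"
  and S0: "0 \<le> S 0" and Ssuc: "\<And>i. S (Suc i) = S i + x i" and x0: "\<And>i. 0 \<le> x i"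
  and m0: "m 0 = uu g w (S 0)" and msuc: "\<And>i. m (Suc i) = m i + p * a^(Suc i) * uu g w (S (Suc i))"
  and kkt: "\<And>i. (0 < x i \<and> a^i*g/(1+g*x i) = m i) \<or> (x i = 0 \<and> a^i*g \<le> m i)"
  and T0: "0 \<le> T 0" and Tsuc: "\<And>i. i < N \<Longrightarrow> T (Suc i) = T i + e i" and e0: "\<And>i. i<N \<Longrightarrow> 0 \<le> e i"
  shows "n \<le> N \<Longrightarrow> (1-p)*w*(ln(1+g*T 0/w) - ln(1+g*S 0/w))
     + (\<Sum>i<n. a^i*(ln(1+g*e i) - ln(1+g*x i)) + p*a^i*w*(ln(1+g*T i/w) - ln(1+g*S i/w)))
     + p*a^n*w*(ln(1+g*T n/w) - ln(1+g*S n/w)) + (\<Sum>i<n. a^i * gg g (e i) (x i)) \<le> m n * (T n - S n)"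
proof (induction n)
  case 0
  have "(1-p)*w*(ln(1+g*T 0/w) - ln(1+g*S 0/w)) + p*w*(ln(1+g*T 0/w) - ln(1+g*S 0/w))
      = w*(ln(1+g*T 0/w) - ln(1+g*S 0/w))" by (simp add: algebra_simps)
  also have "\<dots> \<le> m 0 * (T 0 - S 0)" unfolding m0 by (rule res_tan[OF g w T0 S0])
  finally show ?case by simp
next
  case (Suc n)
  have apos: "0 < a" using a p by simp
  have Snn: "\<And>k. 0 \<le> S k"
  proof -
    fix k show "0 \<le> S k" by (induction k) (use S0 Ssuc x0 in \<open>auto intro: add_nonneg_nonneg\<close>)
  qed
  have Tnn: "\<And>k. k \<le> N \<Longrightarrow> 0 \<le> T k"
  proof -
    fix k show "k \<le> N \<Longrightarrow> 0 \<le> T k"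
    proof (induction k)
      case 0 then show ?case using T0 by simp
    next
      case (Suc k) then show ?case using Tsuc[of k] e0[of k] by simp
    qed
  qed
  have nN: "n < N" using Suc.prems by simp
  define D where "D k = w*(ln(1+g*T k/w) - ln(1+g*S k/w))" for k
  define d where "d k = ln(1+g*e k) - ln(1+g*x k)" for k
  have IH: "(1-p)*D 0 + (\<Sum>i<n. a^i*d i + p*a^i*D i) + p*a^n*D n + (\<Sum>i<n. a^i * gg g (e i) (x i)) \<le> m n * (T n - S n)"
    using Suc.IH nN unfolding D_def d_def by (simp add: algebra_simps)
  have k1: "a^n * d n + a^n * gg g (e n) (x n) \<le> m n * (e n - x n)"
  proof -
    have "a^n * d n + a^n * gg g (e n) (x n) = a^n * (g*(e n - x n)/(1+g*x n))"
      unfolding gg_def d_def by (simp add: algebra_simps)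
    also have "\<dots> \<le> m n * (e n - x n)"
      using kkt[of n]
    proof
      assume h: "0 < x n \<and> a^n*g/(1+g*x n) = m n"
      have "a^n * (g*(e n - x n)/(1+g*x n)) = (a^n*g/(1+g*x n)) * (e n - x n)" by simp
      thus ?thesis using h by simp
    next
      assume h: "x n = 0 \<and> a^n*g \<le> m n"
      have "(a^n*g) * e n \<le> m n * e n" using mult_right_mono[OF conjunct2[OF h] e0[OF nN]] .
      thus ?thesis using h by (simp add: mult.assoc)
    qed
    finally show ?thesis .
  qed
  have k2: "p*a^(Suc n)*D (Suc n) \<le> p*a^(Suc n) * (uu g w (S (Suc n)) * (T (Suc n) - S (Suc n)))"
    unfolding D_def
    using mult_left_mono[OF res_tan[OF g w Tnn[of "Suc n"] Snn[of "Suc n"]], of "p*a^(Suc n)"] Suc.prems p apos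
    by simp
  have eqR: "m (Suc n) * (T (Suc n) - S (Suc n)) = m n * (T n - S n) + m n * (e n - x n) + p*a^(Suc n) * (uu g w (S (Suc n)) * (T (Suc n) - S (Suc n)))"
    unfolding msuc using Tsuc[OF nN] Ssuc[of n] by (simp add: algebra_simps)
  have eqL: "(1-p)*D 0 + (\<Sum>i<Suc n. a^i*d i + p*a^i*D i) + p*a^(Suc n)*D (Suc n) + (\<Sum>i<Suc n. a^i * gg g (e i) (x i))
     = ((1-p)*D 0 + (\<Sum>i<n. a^i*d i + p*a^i*D i) + p*a^n*D n + (\<Sum>i<n. a^i * gg g (e i) (x i)))
       + (a^n * d n + a^n * gg g (e n) (x n)) + p*a^(Suc n)*D (Suc n)"
    by (simp add: algebra_simps)
  have "(1-p)*D 0 + (\<Sum>i<Suc n. a^i*d i + p*a^i*D i) + p*a^(Suc n)*D (Suc n) + (\<Sum>i<Suc n. a^i * gg g (e i) (x i))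
     \<le> m (Suc n) * (T (Suc n) - S (Suc n))"
    unfolding eqL eqR using IH k1 k2 by linarith
  thus ?case unfolding D_def d_def by (simp add: algebra_simps)
qed



definition TT :: "real \<Rightarrow> nat \<Rightarrow> (nat \<Rightarrow> real) \<Rightarrow> nat \<Rightarrow> real" where
  "TT B N \<eta> i = B - (\<Sum>j=1..N-i. \<eta> j)"

definition Psi :: "real \<Rightarrow> real \<Rightarrow> real \<Rightarrow> nat \<Rightarrow> nat \<Rightarrow> (nat \<Rightarrow> real) \<Rightarrow> real" where
  "Psi p g B w N \<eta> = (\<Sum>i<N. (1/(1-p))^i * ln(1+g*\<eta>(N-i)) + p*(1/(1-p))^i*real w*ln(1+g*TT B N \<eta> i/real w))
      + (1-p)*real w*ln(1+g*TT B N \<eta> 0/real w)"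

definition Cst :: "real \<Rightarrow> real \<Rightarrow> real \<Rightarrow> nat \<Rightarrow> real" where
  "Cst p g B w = (\<Sum>k=1..w. p^2 * (1-p)^(k-1) * (real k / 2) * log 2 (1 + g * B / real k))"

lemma pw: "0 < (p::real) \<Longrightarrow> p < 1 \<Longrightarrow> i \<le> N \<Longrightarrow> 1 \<le> w \<Longrightarrow>
   (1-p)^(N - i + w - 1) = (1-p)^(w-1) * (1-p)^N * (1/(1-p))^i"
proof -
  assume p: "0 < p" "p < 1" and i: "i \<le> N" and w: "1 \<le> w"
  have nz: "1 - p \<noteq> 0" using p by simp
  have e: "N - i + w - 1 = (w-1) + (N-i)" using i w by simp
  have "(1-p)^(N-i) = (1-p)^N / (1-p)^i" by (rule power_diff[OF nz i])
  thus ?thesis unfolding e power_add by (simp add: power_one_over)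
qed

lemma sum_ext_N: "(N::nat) \<le> n \<Longrightarrow> (\<forall>j. j \<notin> {1..N} \<longrightarrow> \<eta> j = 0) \<Longrightarrow> (\<Sum>j=1..n. \<eta> j) = (\<Sum>j=1..N. (\<eta> j::real))"
  by (rule sum.mono_neutral_right) auto

lemma part1:
  assumes p: "0 < p" "p < 1" and w: "1 \<le> w" and eta: "\<forall>j. j \<notin> {1..N} \<longrightarrow> \<eta> j = 0"
  shows "(\<Sum>i. p * (1-p)^(i+1+w-1) * (1/2) * log 2 (1 + g * \<eta> (i+1)))
    = (p*(1-p)^(w-1)*(1-p)^N/(2*ln 2)) * (\<Sum>i<N. (1/(1-p))^i * ln(1+g*\<eta>(N-i)))"
proof -
  define f where "f i = p * (1-p)^(i+1+w-1) * (1/2) * log 2 (1 + g * \<eta> (i+1))" for i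
  have "suminf f = (\<Sum>i\<in>{..<N}. f i)"
  proof (rule suminf_finite)
    fix i assume "i \<notin> {..<N}"
    hence "\<eta> (i+1) = 0" using eta by auto
    thus "f i = 0" unfolding f_def by simp
  qed simp
  also have "\<dots> = (\<Sum>i<N. f (N - Suc i))" by (rule sum.nat_diff_reindex[symmetric])
  also have "\<dots> = (\<Sum>i<N. (p*(1-p)^(w-1)*(1-p)^N/(2*ln 2)) * ((1/(1-p))^i * ln(1+g*\<eta>(N-i))))"
  proof (rule sum.cong[OF refl])
    fix i assume "i \<in> {..<N}"
    hence i: "i < N" by simp
    have e1: "N - Suc i + 1 = N - i" using i by simp
    have pwi: "(1-p)^(N-i+w-1) = (1-p)^(w-1) * (1-p)^N * (1/(1-p))^i" using pw[OF p _ w, of i N] i by simp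
    have "f (N - Suc i) = p * (1-p)^(N - i + w - 1) * (1/2) * log 2 (1 + g * \<eta> (N-i))"
      unfolding f_def e1 ..
    also have "\<dots> = (p*(1-p)^(w-1)*(1-p)^N/(2*ln 2)) * ((1/(1-p))^i * ln(1+g*\<eta>(N-i)))"
      unfolding pwi using i by (simp add: log_def)
    finally show "f (N - Suc i) = (p*(1-p)^(w-1)*(1-p)^N/(2*ln 2)) * ((1/(1-p))^i * ln(1+g*\<eta>(N-i)))" .
  qed
  also have "\<dots> = (p*(1-p)^(w-1)*(1-p)^N/(2*ln 2)) * (\<Sum>i<N. (1/(1-p))^i * ln(1+g*\<eta>(N-i)))"
    by (rule sum_distrib_left[symmetric])
  finally show ?thesis unfolding f_def .
qed

lemma part2:
  assumes p: "0 < p" "p < 1" and w: "1 \<le> w" and eta: "\<forall>j. j \<notin> {1..N} \<longrightarrow> \<eta> j = 0"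
  shows "(\<Sum>i. p^2 * (1-p)^(i+1+w-1) * (real w / 2) * log 2 (1 + g * (B - (\<Sum>j=1..i+1. \<eta> j)) / real w))
    = (p*(1-p)^(w-1)*(1-p)^N/(2*ln 2)) * ((\<Sum>i<N. p*(1/(1-p))^i*real w*ln(1+g*TT B N \<eta> i/real w))
      + (1-p)*real w*ln(1+g*TT B N \<eta> 0/real w))"
proof -
  define K where "K = p*(1-p)^(w-1)*(1-p)^N/(2*ln 2)"
  define f where "f i = p^2 * (1-p)^(i+1+w-1) * (real w / 2) * log 2 (1 + g * (B - (\<Sum>j=1..i+1. \<eta> j)) / real w)" for i
  define c where "c = p^2*(1-p)^(N+w)*(real w/2)*log 2 (1+g*TT B N \<eta> 0/real w)"
  have shift: "f (i+N) = c * (1-p)^i" for i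
  proof -
    have "(\<Sum>j=1..i+N+1. \<eta> j) = (\<Sum>j=1..N. \<eta> j)" by (rule sum_ext_N) (use eta in auto)
    moreover have "i+N+1+w-1 = i + (N+w)" using w by simp
    ultimately show ?thesis unfolding f_def c_def TT_def by (simp add: power_add)
  qed
  have gs: "(\<lambda>i. c * (1-p)^i) sums (c * (1 / (1 - (1-p))))"
    by (rule sums_mult, rule geometric_sums) (use p in simp)
  hence sm: "summable (\<lambda>i. f (i+N))" unfolding shift by (rule sums_summable)
  hence smf: "summable f" by simp
  have tail: "(\<Sum>i. f (i+N)) = c / p" using gs unfolding shift[symmetric] by (simp add: sums_iff)
  have "suminf f = (\<Sum>i. f (i+N)) + (\<Sum>i<N. f i)" by (rule suminf_split_initial_segment[OF smf])
  also have "(\<Sum>i<N. f i) = (\<Sum>i<N. f (N - Suc i))" by (rule sum.nat_diff_reindex[symmetric])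
  also have "\<dots> = (\<Sum>i<N. K * (p*(1/(1-p))^i*real w*ln(1+g*TT B N \<eta> i/real w)))"
  proof (rule sum.cong[OF refl])
    fix i assume "i \<in> {..<N}"
    hence i: "i < N" by simp
    have e1: "N - Suc i + 1 = N - i" using i by simp
    have pwi: "(1-p)^(N-i+w-1) = (1-p)^(w-1) * (1-p)^N * (1/(1-p))^i" using pw[OF p _ w, of i N] i by simp
    have "f (N - Suc i) = p^2 * (1-p)^(N - i + w - 1) * (real w / 2) * log 2 (1 + g * TT B N \<eta> i / real w)"
      unfolding f_def e1 TT_def ..
    also have "\<dots> = K * (p*(1/(1-p))^i*real w*ln(1+g*TT B N \<eta> i/real w))"
      unfolding pwi K_def using i by (simp add: log_def power2_eq_square)
    finally show "f (N - Suc i) = K * (p*(1/(1-p))^i*real w*ln(1+g*TT B N \<eta> i/real w))" .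
  qed
  also have "\<dots> = K * (\<Sum>i<N. p*(1/(1-p))^i*real w*ln(1+g*TT B N \<eta> i/real w))"
    by (rule sum_distrib_left[symmetric])
  finally have A: "suminf f = c / p + K * (\<Sum>i<N. p*(1/(1-p))^i*real w*ln(1+g*TT B N \<eta> i/real w))"
    unfolding tail .
  have "c / p = K * ((1-p)*real w*ln(1+g*TT B N \<eta> 0/real w))"
  proof -
    have "(1-p)^(N+w) = (1-p)^(w-1)*(1-p)^N*(1-p)"
      using w by (metis (no_types) add.commute le_add_diff_inverse2 power_Suc2 power_add Suc_eq_plus1 add_Suc_right)
    thus ?thesis unfolding c_def K_def using p by (simp add: log_def power2_eq_square)
  qed
  with A have "suminf f = K * ((\<Sum>i<N. p*(1/(1-p))^i*real w*ln(1+g*TT B N \<eta> i/real w))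
      + (1-p)*real w*ln(1+g*TT B N \<eta> 0/real w))" by (simp add: algebra_simps)
  thus ?thesis unfolding f_def K_def .
qed

lemma bridge:
  assumes p: "0 < p" "p < 1" and w: "1 \<le> w" and eta: "\<forall>j. j \<notin> {1..N} \<longrightarrow> \<eta> j = 0"
  shows "T_N p g B w N \<eta> = Cst p g B w + (p*(1-p)^(w-1)*(1-p)^N/(2*ln 2)) * Psi p g B w N \<eta>"
proof -
  have e: "(\<lambda>j. if 1 \<le> j \<and> j \<le> N then \<eta> j else 0) = \<eta>" by (rule ext) (use eta in auto)
  have "T_N p g B w N \<eta> = T_inf p g B w \<eta>" unfolding T_N_def e ..
  also have "\<dots> = Cst p g B w + (p*(1-p)^(w-1)*(1-p)^N/(2*ln 2)) * (\<Sum>i<N. (1/(1-p))^i * ln(1+g*\<eta>(N-i)))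
     + (p*(1-p)^(w-1)*(1-p)^N/(2*ln 2)) * ((\<Sum>i<N. p*(1/(1-p))^i*real w*ln(1+g*TT B N \<eta> i/real w))
      + (1-p)*real w*ln(1+g*TT B N \<eta> 0/real w))"
    unfolding T_inf_def Cst_def by (simp only: part1[OF p w eta] part2[OF p w eta])
  also have "\<dots> = Cst p g B w + (p*(1-p)^(w-1)*(1-p)^N/(2*ln 2)) * Psi p g B w N \<eta>"
    unfolding Psi_def by (simp add: sum.distrib algebra_simps)
  finally show ?thesis .
qed



lemma sum1N: "(\<Sum>j=1..N. h j) = (\<Sum>i<N. (h::nat\<Rightarrow>real) (Suc i))"
  using sum.atLeast1_atMost_eq[of h N] by simp

lemma sum_rev1N: "(\<Sum>j=1..N. h (N - j)) = (\<Sum>i<N. (h::nat\<Rightarrow>real) i)"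
proof -
  have "(\<Sum>j=1..N. h (N - j)) = (\<Sum>i<N. h (N - Suc i))" by (rule sum1N)
  also have "\<dots> = (\<Sum>i<N. h i)" by (rule sum.nat_diff_reindex)
  finally show ?thesis .
qed

lemma TT_suc: "i < N \<Longrightarrow> TT B N \<eta> (Suc i) = TT B N \<eta> i + \<eta> (N - i)"
proof -
  assume i: "i < N"
  have e: "N - i = Suc (N - Suc i)" using i by simp
  have "(\<Sum>j=1..N-i. \<eta> j) = (\<Sum>j=1..N - Suc i. \<eta> j) + \<eta> (N - i)"
    unfolding e by (simp add: sum.cl_ivl_Suc)
  thus ?thesis unfolding TT_def by simp
qed

lemma TT_N: "TT B N \<eta> N = B" unfolding TT_def by simp

lemma core:
  assumes p: "0 < p" "p < 1" and g: "0 < g" and w: "1 \<le> w" and R: "0 < R"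
  and a: "a = 1/(1-p)"
  and SN: "fst (SM p a g (real w) R N) = B"
  and xi: "\<xi> = (\<lambda>j. if 1 \<le> j \<and> j \<le> N then xx p a g (real w) R (N-j) else 0)"
  shows "\<xi> \<in> feasible_N B N"
    "\<And>\<eta>. \<eta> \<in> feasible_N B N \<Longrightarrow>
      T_N p g B w N \<eta> + (p*(1-p)^(w-1)*(1-p)^N/(2*ln 2)) * (\<Sum>i<N. a^i * gg g (\<eta> (N-i)) (xx p a g (real w) R i))
       \<le> T_N p g B w N \<xi>"
    "B - (\<Sum>j=1..N. \<xi> j) = R"
proof -
  define wr where "wr = real w"
  have wr: "0 < wr" using w wr_def by simp
  define x where "x i = xx p a g wr R i" for i
  define S where "S i = fst (SM p a g wr R i)" for i
  define m where "m i = snd (SM p a g wr R i)" for i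
  have x0: "\<And>i. 0 \<le> x i" unfolding x_def xx_def by simp
  have Ssuc: "\<And>i. S (Suc i) = S i + x i" unfolding S_def x_def by (rule SM_fst_Suc)
  have msuc: "\<And>i. m (Suc i) = m i + p * a^(Suc i) * uu g wr (S (Suc i))"
    unfolding S_def m_def by (rule SM_snd_Suc)
  have S0: "S 0 = R" unfolding S_def by (rule SM_fst_0)
  have m0: "m 0 = uu g wr (S 0)" unfolding S_def m_def by (simp add: SM_fst_0 SM_snd_0)
  have mpos: "\<And>i. 0 < m i" unfolding m_def using SM_bounds[OF p a g wr, of R] R by simp
  have apos: "0 < a" using a p by simp
  have kkt: "\<And>i. (0 < x i \<and> a^i*g/(1+g*x i) = m i) \<or> (x i = 0 \<and> a^i*g \<le> m i)"
  proof -
    fix i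
    show "(0 < x i \<and> a^i*g/(1+g*x i) = m i) \<or> (x i = 0 \<and> a^i*g \<le> m i)"
    proof (cases "0 < a^i / m i - 1/g")
      case True
      hence xe: "x i = a^i / m i - 1/g" unfolding x_def xx_def m_def by simp
      have "1 + g * x i = g * a^i / m i" unfolding xe using g mpos[of i] by (simp add: field_simps)
      hence "a^i*g/(1+g*x i) = a^i*g/(g * a^i / m i)" by simp
      also have "\<dots> = m i" using g mpos[of i] apos by (simp add: field_simps)
      finally have "a^i*g/(1+g*x i) = m i" .
      thus ?thesis using True xe by simp
    next
      case False
      hence xe: "x i = 0" unfolding x_def xx_def m_def by simp
      have "a^i / m i \<le> 1/g" using False by simp
      hence "a^i * g \<le> m i" using g mpos[of i] by (simp add: field_simps)
      thus ?thesis using xe by simp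
    qed
  qed
  have Ssum: "\<And>n. S n = R + (\<Sum>i<n. x i)"
  proof -
    fix n show "S n = R + (\<Sum>i<n. x i)" by (induction n) (simp_all add: S0 Ssuc)
  qed
  have sumxi: "(\<Sum>j=1..N. \<xi> j) = (\<Sum>i<N. x i)"
  proof -
    have "(\<Sum>j=1..N. \<xi> j) = (\<Sum>j=1..N. x (N - j))"
      by (rule sum.cong) (auto simp: xi x_def wr_def)
    also have "\<dots> = (\<Sum>i<N. x i)" by (rule sum_rev1N)
    finally show ?thesis .
  qed
  show res: "B - (\<Sum>j=1..N. \<xi> j) = R" using sumxi Ssum[of N] SN unfolding S_def wr_def by simp
  show feas: "\<xi> \<in> feasible_N B N"
    unfolding feasible_N_def using res R x0 by (auto simp: xi x_def wr_def)
  have xiN: "\<And>i. i < N \<Longrightarrow> \<xi> (N - i) = x i" by (auto simp: xi x_def wr_def)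
  have xiz: "\<forall>j. j \<notin> {1..N} \<longrightarrow> \<xi> j = 0" by (auto simp: xi)
  have TTxi: "\<And>k. k \<le> N \<Longrightarrow> TT B N \<xi> (N - k) = S (N - k)"
  proof -
    fix k show "k \<le> N \<Longrightarrow> TT B N \<xi> (N - k) = S (N - k)"
    proof (induction k)
      case 0 then show ?case using TT_N SN unfolding S_def wr_def by simp
    next
      case (Suc k)
      define i where "i = N - Suc k"
      have i: "i < N" "Suc i = N - k" using Suc.prems i_def by auto
      have "TT B N \<xi> (Suc i) = TT B N \<xi> i + x i" using TT_suc[OF i(1)] xiN[OF i(1)] by simp
      moreover have "TT B N \<xi> (Suc i) = S (Suc i)" using Suc i by simp
      ultimately have "TT B N \<xi> i = S i" using Ssuc[of i] by simp
      thus ?case unfolding i_def .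
    qed
  qed
  have TTxi': "\<And>i. i \<le> N \<Longrightarrow> TT B N \<xi> i = S i"
    using TTxi by (metis diff_diff_cancel diff_le_self)
  have Psixi: "Psi p g B w N \<xi> = (\<Sum>i<N. a^i * ln(1+g*x i) + p*a^i*wr*ln(1+g*S i/wr)) + (1-p)*wr*ln(1+g*S 0/wr)"
    unfolding Psi_def a[symmetric] wr_def[symmetric]
    by (intro arg_cong2[where f="(+)"] sum.cong) (auto simp: xiN TTxi')
  have K: "0 < p*(1-p)^(w-1)*(1-p)^N/(2*ln 2)" using p by simp
  fix \<eta> assume eta: "\<eta> \<in> feasible_N B N"
  define e where "e i = \<eta> (N - i)" for i
  define T where "T i = TT B N \<eta> i" for i
  have etaz: "\<forall>j. j \<notin> {1..N} \<longrightarrow> \<eta> j = 0" using eta unfolding feasible_N_def by auto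
  have e0: "\<And>i. i < N \<Longrightarrow> 0 \<le> e i" using eta unfolding feasible_N_def e_def by auto
  have T0: "0 \<le> T 0" using eta unfolding feasible_N_def T_def TT_def by auto
  have Tsuc: "\<And>i. i < N \<Longrightarrow> T (Suc i) = T i + e i" unfolding T_def e_def by (rule TT_suc)
  have D: "(1-p)*wr*(ln(1+g*T 0/wr) - ln(1+g*S 0/wr))
     + (\<Sum>i<N. a^i*(ln(1+g*e i) - ln(1+g*x i)) + p*a^i*wr*(ln(1+g*T i/wr) - ln(1+g*S i/wr)))
     + p*a^N*wr*(ln(1+g*T N/wr) - ln(1+g*S N/wr)) + (\<Sum>i<N. a^i * gg g (e i) (x i)) \<le> m N * (T N - S N)"
    by (rule Dlem[OF p a g wr _ Ssuc x0 m0 msuc kkt T0 Tsuc e0]) (use S0 R in auto)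
  have TN: "T N = S N" unfolding T_def using TT_N SN unfolding S_def wr_def by simp
  have Psieta: "Psi p g B w N \<eta> = (\<Sum>i<N. a^i * ln(1+g*e i) + p*a^i*wr*ln(1+g*T i/wr)) + (1-p)*wr*ln(1+g*T 0/wr)"
    unfolding Psi_def a[symmetric] wr_def[symmetric] e_def T_def ..
  have diff: "Psi p g B w N \<eta> - Psi p g B w N \<xi> = (1-p)*wr*(ln(1+g*T 0/wr) - ln(1+g*S 0/wr))
     + (\<Sum>i<N. a^i*(ln(1+g*e i) - ln(1+g*x i)) + p*a^i*wr*(ln(1+g*T i/wr) - ln(1+g*S i/wr)))"
  proof -
    have "(\<Sum>i<N. a^i*(ln(1+g*e i) - ln(1+g*x i)) + p*a^i*wr*(ln(1+g*T i/wr) - ln(1+g*S i/wr)))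
      = (\<Sum>i<N. (a^i * ln(1+g*e i) + p*a^i*wr*ln(1+g*T i/wr)) - (a^i * ln(1+g*x i) + p*a^i*wr*ln(1+g*S i/wr)))"
      by (rule sum.cong) (simp_all add: algebra_simps)
    also have "\<dots> = (\<Sum>i<N. a^i * ln(1+g*e i) + p*a^i*wr*ln(1+g*T i/wr)) - (\<Sum>i<N. a^i * ln(1+g*x i) + p*a^i*wr*ln(1+g*S i/wr))"
      by (rule sum_subtractf)
    finally show ?thesis unfolding Psieta Psixi by (simp add: algebra_simps)
  qed
  have "Psi p g B w N \<eta> + (\<Sum>i<N. a^i * gg g (e i) (x i)) \<le> Psi p g B w N \<xi>"
    using D diff TN by simp
  hence "(p*(1-p)^(w-1)*(1-p)^N/(2*ln 2)) * (Psi p g B w N \<eta> + (\<Sum>i<N. a^i * gg g (e i) (x i)))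
      \<le> (p*(1-p)^(w-1)*(1-p)^N/(2*ln 2)) * Psi p g B w N \<xi>"
    using K by (rule mult_left_mono[OF _ less_imp_le])
  thus "T_N p g B w N \<eta> + (p*(1-p)^(w-1)*(1-p)^N/(2*ln 2)) * (\<Sum>i<N. a^i * gg g (\<eta> (N-i)) (xx p a g (real w) R i))
       \<le> T_N p g B w N \<xi>"
    unfolding bridge[OF p w etaz] bridge[OF p w xiz] e_def x_def wr_def by (simp add: algebra_simps)
qed



lemma Bres_eq:
  assumes p: "0 < p" "p < 1" and g: "0 < g" and w: "1 \<le> w" and R: "0 < R"
  and SN: "fst (SM p (1/(1-p)) g (real w) R N) = B"
  shows "B_res p g B w N = R"
proof -
  define a where "a = 1/(1-p)"
  have apos: "0 < a" using a_def p by simp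
  have SN': "fst (SM p a g (real w) R N) = B" using SN a_def by simp
  define \<xi> where "\<xi> = (\<lambda>j. if 1 \<le> j \<and> j \<le> N then xx p a g (real w) R (N-j) else 0)"
  note c = core[OF p g w R a_def SN' \<xi>_def]
  define K where "K = p*(1-p)^(w-1)*(1-p)^N/(2*ln 2)"
  have K: "0 < K" unfolding K_def using p by simp
  have x0: "\<And>i. 0 \<le> xx p a g (real w) R i" unfolding xx_def by simp
  have Sg: "\<And>\<eta>. \<eta> \<in> feasible_N B N \<Longrightarrow> 0 \<le> (\<Sum>i<N. a^i * gg g (\<eta> (N-i)) (xx p a g (real w) R i))"
    by (rule sum_nonneg) (use apos g x0 gg_nonneg in \<open>auto simp: feasible_N_def\<close>)
  have opt: "opt_N p g B w N = \<xi>" unfolding opt_N_def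
  proof (rule the_equality)
    show "\<xi> \<in> feasible_N B N \<and> (\<forall>\<eta>\<in>feasible_N B N. T_N p g B w N \<eta> \<le> T_N p g B w N \<xi>)"
    proof (intro conjI ballI)
      show "\<xi> \<in> feasible_N B N" by (rule c(1))
      fix \<eta> assume eta: "\<eta> \<in> feasible_N B N"
      have "0 \<le> K * (\<Sum>i<N. a^i * gg g (\<eta> (N-i)) (xx p a g (real w) R i))"
        using K Sg[OF eta] by simp
      thus "T_N p g B w N \<eta> \<le> T_N p g B w N \<xi>" using c(2)[OF eta] unfolding K_def by linarith
    qed
  next
    fix \<zeta> assume z: "\<zeta> \<in> feasible_N B N \<and> (\<forall>\<eta>\<in>feasible_N B N. T_N p g B w N \<eta> \<le> T_N p g B w N \<zeta>)"
    hence zf: "\<zeta> \<in> feasible_N B N" and le: "T_N p g B w N \<xi> \<le> T_N p g B w N \<zeta>" using c(1) by auto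
    have "K * (\<Sum>i<N. a^i * gg g (\<zeta> (N-i)) (xx p a g (real w) R i)) \<le> 0"
      using c(2)[OF zf] le unfolding K_def by linarith
    hence "(\<Sum>i<N. a^i * gg g (\<zeta> (N-i)) (xx p a g (real w) R i)) \<le> 0"
      using K by (simp add: mult_le_0_iff)
    hence "(\<Sum>i<N. a^i * gg g (\<zeta> (N-i)) (xx p a g (real w) R i)) = 0" using Sg[OF zf] by simp
    hence all0: "\<forall>i\<in>{..<N}. a^i * gg g (\<zeta> (N-i)) (xx p a g (real w) R i) = 0"
      by (subst (asm) sum_nonneg_eq_0_iff) (use apos g x0 gg_nonneg zf in \<open>auto simp: feasible_N_def\<close>)
    have zeq: "\<And>i. i < N \<Longrightarrow> \<zeta> (N-i) = xx p a g (real w) R i"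
    proof (rule ccontr)
      fix i assume i: "i < N" and ne: "\<zeta> (N-i) \<noteq> xx p a g (real w) R i"
      have z0: "0 \<le> \<zeta> (N-i)" using zf i unfolding feasible_N_def by auto
      have "0 < gg g (\<zeta> (N-i)) (xx p a g (real w) R i)" by (rule gg_pos[OF g z0 x0 ne])
      hence "0 < a^i * gg g (\<zeta> (N-i)) (xx p a g (real w) R i)" using apos by simp
      thus False using all0 i by auto
    qed
    show "\<zeta> = \<xi>"
    proof (rule ext)
      fix j show "\<zeta> j = \<xi> j"
      proof (cases "1 \<le> j \<and> j \<le> N")
        case True
        hence "N - (N - j) = j" "N - j < N" by auto
        then show ?thesis using zeq[of "N - j"] True unfolding \<xi>_def by simp
      next
        case False
        then show ?thesis using zf unfolding feasible_N_def \<xi>_def by auto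
      qed
    qed
  qed
  show ?thesis unfolding B_res_def opt using c(3) .
qed

theorem lemma8:
  fixes p \<gamma> B :: real and w :: nat
  assumes "0 < p" "p < 1" "0 < \<gamma>" "0 < B" "1 \<le> w"
  shows "\<forall>N\<ge>1. B_res p \<gamma> B w (Suc N) < B_res p \<gamma> B w N"
proof (intro allI impI)
  fix N :: nat assume "1 \<le> N"
  have p: "0 < p" "p < 1" and g: "0 < \<gamma>" and B: "0 < B" and w: "1 \<le> w" using assms by auto
  define a where "a = 1/(1-p)"
  have wr: "0 < real w" using w by simp
  define f where "f n R = fst (SM p a \<gamma> (real w) R n)" for n R
  have cont: "\<And>n c. 0 \<le> c \<Longrightarrow> continuous_on {0..c} (f n)"
  proof -
    fix n and c :: real assume "0 \<le> c"
    have "continuous_on {0..} (\<lambda>R. fst (SM p a \<gamma> (real w) R n))"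
      using SM_cont[OF p a_def g wr] by blast
    thus "continuous_on {0..c} (f n)" unfolding f_def by (rule continuous_on_subset) auto
  qed
  have f0: "\<And>n. f n 0 = 0" unfolding f_def using SM_zero[OF p a_def g wr] by simp
  have fge: "\<And>n R. 0 \<le> R \<Longrightarrow> R \<le> f n R" unfolding f_def using SM_bounds[OF p a_def g wr] by blast
  obtain R where R: "0 \<le> R" "R \<le> B" "f N R = B"
    using IVT'[of "f N" 0 B B] f0 fge[of B N] cont[of B N] B by auto
  have Rpos: "0 < R" using R f0[of N] B by (cases "R = 0") auto
  have BN: "B_res p \<gamma> B w N = R"
    by (rule Bres_eq[OF p g w Rpos]) (use R in \<open>simp add: f_def a_def\<close>)
  have "f (Suc N) R = f N R + xx p a \<gamma> (real w) R N" unfolding f_def by (rule SM_fst_Suc)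
  moreover have "0 < xx p a \<gamma> (real w) R N" by (rule xx_pos[OF p a_def g wr Rpos])
  ultimately have big: "B < f (Suc N) R" using R by simp
  obtain R' where R': "0 \<le> R'" "R' \<le> R" "f (Suc N) R' = B"
    using IVT'[of "f (Suc N)" 0 B R] f0[of "Suc N"] big cont[of R "Suc N"] B R by auto
  have R'pos: "0 < R'" using R' f0[of "Suc N"] B by (cases "R' = 0") auto
  have R'lt: "R' < R" using R' big by (cases "R' = R") auto
  have BSN: "B_res p \<gamma> B w (Suc N) = R'"
    by (rule Bres_eq[OF p g w R'pos]) (use R' in \<open>simp add: f_def a_def\<close>)
  show "B_res p \<gamma> B w (Suc N) < B_res p \<gamma> B w N" using BN BSN R'lt by simp
qed

end
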